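(* Let $X$ be a continuous random variable with probability density function $f$ whose support is the interval $(L,R)$, $-\infty\le L<R\le\infty$, and suppose $f$ is decreasing on $(L,R)$. Then for every $p\in\mathcal{D}=\{p\ge1:E[|X|^{p-1}]<\infty\}$, with $\nu_p$ the $p$-mean of $X$ and $H_p=\int_0^{\nu_p-L} y^{p-1} f(\nu_p-y)\,dy$, the density $\frac{1}{H_p}y^{p-1}f(\nu_p+y)\mathbf{1}_{(0,R-\nu_p)}(y)$ exhibits strict stochastic dominance over the density $\frac{1}{H_p}y^{p-1}f(\nu_p-y)\mathbf{1}_{(0,\nu_p-L)}(y)$.
   Context: For $p\ge 1$ and a continuous random variable $X$ with $E[|X|^{p-1}]<\infty$, the $p$-mean $\nu_p$ is the unique real solution $\nu$ of $E[(X-\nu)_+^{p-1}]=E[(\nu-X)_+^{p-1}]$; equivalently $\int_0^{\nu_p-L} y^{p-1} f(\nu_p-y)\,dy=\int_0^{R-\nu_p} y^{p-1} f(\nu_p+y)\,dy$. A distribution with CDF $F_Y$ exhibits strict stochastic dominance over one with CDF $F_Z$ if $F_Z(x)\ge F_Y(x)$ for all $x$ and $F_Z\not\equiv F_Y$. *)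

theory Defs
  imports "HOL-Probability.Probability"
begin

text \<open>Power y^a for y \<ge> 0 with the convention 0^0 = 1.\<close>
definition rpow :: "real \<Rightarrow> real \<Rightarrow> real" where
  "rpow y a = (if a = 0 then 1 else y powr a)"

text \<open>Positive-part power (x)_+^a = x^a for x > 0 and 0 for x \<le> 0
  (so that for p = 1 the p-mean is the median).\<close>
definition ppos :: "real \<Rightarrow> real \<Rightarrow> real" where
  "ppos x a = (if x > 0 then x powr a else 0)"

definition p_mean :: "'a measure \<Rightarrow> ('a \<Rightarrow> real) \<Rightarrow> real \<Rightarrow> real" where
  "p_mean M X p = (THE \<nu>. (\<integral>\<omega>. ppos (X \<omega> - \<nu>) (p - 1) \<partial>M)
                         = (\<integral>\<omega>. ppos (\<nu> - X \<omega>) (p - 1) \<partial>M))"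

definition strictly_dominates :: "real measure \<Rightarrow> real measure \<Rightarrow> bool" where
  "strictly_dominates PY PZ \<longleftrightarrow> (\<forall>x. cdf PZ x \<ge> cdf PY x) \<and> (\<exists>x. cdf PZ x \<noteq> cdf PY x)"

end

theory Submission
  imports Defs
begin
lemma rpow_nonneg: "y \<ge> 0 \<Longrightarrow> rpow y a \<ge> 0"
  by (simp add: rpow_def)

lemma ppos_nonneg: "ppos z a \<ge> 0"
  by (simp add: ppos_def)

lemma ppos_le_rpow: "ppos z a \<le> rpow (abs z) a"
  by (auto simp: ppos_def rpow_def)

lemma ppos_mono: "a \<ge> 0 \<Longrightarrow> z1 \<le> z2 \<Longrightarrow> ppos z1 a \<le> ppos z2 a"
  by (auto simp: ppos_def intro: powr_mono2)

lemma ppos_pos: "z > 0 \<Longrightarrow> ppos z a > 0"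
  by (simp add: ppos_def)

lemma ppos_ge1: "a \<ge> 0 \<Longrightarrow> z \<ge> 1 \<Longrightarrow> ppos z a \<ge> 1"
  by (auto simp: ppos_def intro: ge_one_powr_ge_zero)

lemma ppos_eq_rpow: "z > 0 \<Longrightarrow> ppos z a = rpow z a"
  by (simp add: ppos_def rpow_def)

lemma rpow_mono: "a \<ge> 0 \<Longrightarrow> 0 \<le> x \<Longrightarrow> x \<le> y \<Longrightarrow> rpow x a \<le> rpow y a"
  by (auto simp: rpow_def intro: powr_mono2)

lemma rpow_tri:
  assumes "a \<ge> 0"
  shows "rpow (abs (x - v)) a \<le> 2 powr a * (rpow (abs x) a + rpow (abs v) a)"
proof (cases "a = 0")
  case True then show ?thesis by (simp add: rpow_def)
next
  case False
  have "rpow (abs (x - v)) a \<le> rpow (2 * max (abs x) (abs v)) a"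
    using assms by (intro rpow_mono) auto
  also have "\<dots> = 2 powr a * rpow (max (abs x) (abs v)) a"
    using False by (simp add: rpow_def powr_mult)
  also have "rpow (max (abs x) (abs v)) a \<le> rpow (abs x) a + rpow (abs v) a"
    by (cases "(abs x) \<le> (abs v)") (auto simp: max_def rpow_def)
  finally show ?thesis by (simp add: mult_left_mono)
qed

lemma ppos_meas[measurable]: "(\<lambda>z. ppos z a) \<in> borel_measurable borel"
  unfolding ppos_def by measurable

lemma rpow_meas[measurable]: "(\<lambda>z. rpow z a) \<in> borel_measurable borel"
  unfolding rpow_def by measurable

lemma ppos_isCont:
  assumes "z0 \<noteq> 0" shows "isCont (\<lambda>z. ppos z a) z0"
proof (cases "z0 > 0")
  case True
  have ev: "\<forall>\<^sub>F z in nhds z0. ppos z a = z powr a"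
    using eventually_nhds_in_open[of "{0<..}" z0] True
    by (auto simp: ppos_def elim!: eventually_mono)
  show ?thesis
    by (subst isCont_cong[OF ev]) (use True in \<open>auto intro!: continuous_intros\<close>)
next
  case False
  then have "z0 < 0" using assms by simp
  have ev: "\<forall>\<^sub>F z in nhds z0. ppos z a = 0"
    using eventually_nhds_in_open[of "{..<0}" z0] \<open>z0 < 0\<close>
    by (auto simp: ppos_def elim!: eventually_mono)
  show ?thesis
    by (subst isCont_cong[OF ev]) auto
qed

lemma integral_pos_interval:
  fixes g :: "real \<Rightarrow> real"
  assumes int: "integrable lborel g" and nn: "\<And>x. g x \<ge> 0" and lr: "l < r"
    and pos: "\<And>x. l < x \<Longrightarrow> x < r \<Longrightarrow> g x > 0"
  shows "integral\<^sup>L lborel g > 0"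
proof -
  have ge: "integral\<^sup>L lborel g \<ge> 0" using nn by simp
  show ?thesis
  proof (rule ccontr)
    assume "\<not> ?thesis"
    then have "integral\<^sup>L lborel g = 0" using ge by simp
    then have "AE x in lborel. g x = 0"
      using integral_nonneg_eq_0_iff_AE[OF int] nn by simp
    then have "AE x in lborel. x \<notin> {l<..<r}"
      by eventually_elim (use pos in force)
    then have "emeasure lborel {l<..<r} = 0"
      by (subst AE_iff_measurable[symmetric, of "{l<..<r}"]) auto
    then show False using lr by simp
  qed
qed
locale pm =
  fixes f :: "real \<Rightarrow> real" and L R :: ereal and a :: real
  assumes f_nonneg: "\<And>x. f x \<ge> 0"
  and LR: "L < R"
  and f_pos: "\<And>x. f x > 0 \<longleftrightarrow> (L < ereal x \<and> ereal x < R)"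
  and f_dec: "\<And>x y. L < ereal x \<Longrightarrow> x < y \<Longrightarrow> ereal y < R \<Longrightarrow> f y < f x"
  and a_nonneg: "a \<ge> 0"
  and f_meas[measurable]: "f \<in> borel_measurable borel"
  and f_int: "integrable lborel f"
  and fm_int: "integrable lborel (\<lambda>x. f x * rpow (abs x) a)"
begin

definition G where "G c \<nu> = (\<integral>x. f x * ppos (c * (x - \<nu>)) a \<partial>lborel)"

definition W where "W K x = f x * (2 powr a * (rpow (abs x) a + rpow K a))"

lemma W_int: "integrable lborel (W K)"
proof -
  have "integrable lborel (\<lambda>x. 2 powr a * (f x * rpow (abs x) a) + (2 powr a * rpow K a) * f x)"
    by (rule Bochner_Integration.integrable_add[OF Bochner_Integration.integrable_mult_right[OF fm_int] Bochner_Integration.integrable_mult_right[OF f_int]])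
  moreover have "W K = (\<lambda>x. 2 powr a * (f x * rpow (abs x) a) + (2 powr a * rpow K a) * f x)"
    by (auto simp: W_def fun_eq_iff algebra_simps)
  ultimately show ?thesis by simp
qed

lemma W_nonneg: "abs \<nu> \<le> K \<Longrightarrow> W K x \<ge> 0"
  using f_nonneg[of x] rpow_nonneg[of "abs x" a] rpow_nonneg[of K a]
  by (simp add: W_def)

lemma dom:
  assumes "abs c = 1" "abs \<nu> \<le> K"
  shows "norm (f x * ppos (c * (x - \<nu>)) a) \<le> W K x"
proof -
  have "ppos (c * (x - \<nu>)) a \<le> rpow (abs (c * (x - \<nu>))) a" by (rule ppos_le_rpow)
  also have "abs (c * (x - \<nu>)) = abs (x - \<nu>)" using assms by (simp add: abs_mult)
  also have "rpow (abs (x - \<nu>)) a \<le> 2 powr a * (rpow (abs x) a + rpow (abs \<nu>) a)"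
    using a_nonneg by (rule rpow_tri)
  also have "\<dots> \<le> 2 powr a * (rpow (abs x) a + rpow K a)"
    using assms a_nonneg by (intro mult_left_mono add_left_mono rpow_mono) auto
  finally have "ppos (c * (x - \<nu>)) a \<le> 2 powr a * (rpow (abs x) a + rpow K a)" .
  then show ?thesis
    using f_nonneg[of x] ppos_nonneg[of "c * (x - \<nu>)" a]
    by (simp add: W_def abs_mult mult_left_mono)
qed

lemma G_int:
  assumes c: "abs c = 1" shows "integrable lborel (\<lambda>x. f x * ppos (c * (x - \<nu>)) a)"
proof (rule Bochner_Integration.integrable_bound[OF W_int[of "abs \<nu>"]])
  show "(\<lambda>x. f x * ppos (c * (x - \<nu>)) a) \<in> borel_measurable lborel" by measurable
  show "AE x in lborel. norm (f x * ppos (c * (x - \<nu>)) a) \<le> norm (W (abs \<nu>) x)"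
  proof (intro AE_I2)
    fix x
    show "norm (f x * ppos (c * (x - \<nu>)) a) \<le> norm (W (abs \<nu>) x)"
      using dom[OF c order_refl, where x=x and \<nu>=\<nu>] W_nonneg[OF order_refl, where x=x and \<nu>=\<nu>] by simp
  qed
qed

lemma G_cont:
  assumes c: "abs c = 1" shows "isCont (G c) \<nu>0"
proof (rule continuous_at_sequentiallyI)
  fix S :: "nat \<Rightarrow> real" assume S: "S \<longlonglongrightarrow> \<nu>0"
  then have "Bseq S" by (rule convergent_imp_Bseq[OF convergentI])
  then obtain K where K: "\<And>n. norm (S n) \<le> K" by (auto simp: Bseq_def)
  show "(\<lambda>n. G c (S n)) \<longlonglongrightarrow> G c \<nu>0"
    unfolding G_def
  proof (rule integral_dominated_convergence[where w = "W K"])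
    show "integrable lborel (W K)" by (rule W_int)
    show "AE x in lborel. norm (f x * ppos (c * (x - S n)) a) \<le> W K x" for n
      using K[of n] by (intro AE_I2 dom c) auto
    show "AE x in lborel. (\<lambda>n. f x * ppos (c * (x - S n)) a) \<longlonglongrightarrow> f x * ppos (c * (x - \<nu>0)) a"
      using AE_lborel_singleton[of \<nu>0]
    proof eventually_elim
      case (elim x)
      then have "c * (x - \<nu>0) \<noteq> 0" using c by auto
      then have "isCont (\<lambda>z. ppos z a) (c * (x - \<nu>0))" by (rule ppos_isCont)
      moreover have "(\<lambda>n. c * (x - S n)) \<longlonglongrightarrow> c * (x - \<nu>0)"
        by (intro tendsto_intros S)
      ultimately have "(\<lambda>n. ppos (c * (x - S n)) a) \<longlonglongrightarrow> ppos (c * (x - \<nu>0)) a"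
        by (rule isCont_tendsto_compose)
      then show ?case by (intro tendsto_intros)
    qed
  qed auto
qed

lemma G1_top: "(G 1 \<longlongrightarrow> 0) at_top"
proof -
  have "((\<lambda>\<nu>. \<integral>x. f x * ppos (1 * (x - \<nu>)) a \<partial>lborel) \<longlongrightarrow> (\<integral>x. (0::real) \<partial>(lborel::real measure))) at_top"
  proof (rule integral_dominated_convergence_at_top[where w = "\<lambda>x. f x * rpow (abs x) a" and s = "\<lambda>\<nu> x. f x * ppos (1 * (x - \<nu>)) a" and f = "\<lambda>x. 0"])
    show "integrable lborel (\<lambda>x. f x * rpow (abs x) a)" by (rule fm_int)
    show "AE x in lborel. ((\<lambda>\<nu>. f x * ppos (1 * (x - \<nu>)) a) \<longlongrightarrow> 0) at_top"
    proof (intro AE_I2)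
      fix x :: real
      have "\<forall>\<^sub>F \<nu> in at_top. f x * ppos (1 * (x - \<nu>)) a = 0"
        using eventually_ge_at_top[of x] by eventually_elim (auto simp: ppos_def)
      then show "((\<lambda>\<nu>. f x * ppos (1 * (x - \<nu>)) a) \<longlongrightarrow> 0) at_top"
        by (rule tendsto_eventually)
    qed
    show "\<forall>\<^sub>F \<nu> in at_top. AE x in lborel. norm (f x * ppos (1 * (x - \<nu>)) a) \<le> f x * rpow (abs x) a"
      using eventually_ge_at_top[of 0]
    proof eventually_elim
      case (elim \<nu>)
      show ?case
      proof (intro AE_I2)
        fix x :: real
        have "ppos (x - \<nu>) a \<le> rpow (abs x) a"
        proof (cases "x - \<nu> > 0")
          case True
          then have "ppos (x - \<nu>) a = rpow (x - \<nu>) a" by (rule ppos_eq_rpow)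
          also have "\<dots> \<le> rpow (abs x) a" using True elim a_nonneg by (intro rpow_mono) auto
          finally show ?thesis .
        qed (auto simp: ppos_def rpow_def)
        then show "norm (f x * ppos (1 * (x - \<nu>)) a) \<le> f x * rpow (abs x) a"
          using f_nonneg[of x] ppos_nonneg[of "x - \<nu>" a] by (simp add: abs_mult mult_left_mono)
      qed
    qed
  qed auto
  then show ?thesis by (simp add: G_def[abs_def])
qed


lemma exists_lr: obtains l r :: real where "L < ereal l" "l < r" "ereal r < R"
proof -
  obtain l where l: "L < ereal l" "ereal l < R" using ereal_dense2[OF LR] by blast
  obtain r where r: "ereal l < ereal r" "ereal r < R" using ereal_dense2[OF l(2)] by blast
  show ?thesis using l r that by auto
qed

lemma f_zero: "\<not> (L < ereal x \<and> ereal x < R) \<Longrightarrow> f x = 0"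
  using f_pos[of x] f_nonneg[of x] by auto

lemma phi_pos_left:
  assumes "ereal \<nu> \<le> L" shows "G 1 \<nu> - G (-1) \<nu> > 0"
proof -
  obtain l r where lr: "L < ereal l" "l < r" "ereal r < R" by (rule exists_lr)
  have "G (-1) \<nu> = (\<integral>x. (0::real) \<partial>(lborel::real measure))"
    unfolding G_def
  proof (rule Bochner_Integration.integral_cong[OF refl])
    fix x
    show "f x * ppos (-1 * (x - \<nu>)) a = 0"
    proof (cases "x < \<nu>")
      case True
      then have "ereal x < ereal \<nu>" by simp
      then have "ereal x < L" using assms by (rule less_le_trans)
      then have "\<not> L < ereal x" by simp
      then show ?thesis using f_zero[of x] by auto
    qed (auto simp: ppos_def)
  qed
  then have z: "G (-1) \<nu> = 0" by simp
  have "G 1 \<nu> > 0"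
    unfolding G_def
  proof (rule integral_pos_interval[OF G_int _ lr(2)])
    fix x assume x: "l < x" "x < r"
    then have "L < ereal x" "ereal x < R" using lr
      by (meson ereal_less_le less_ereal.simps(1) less_imp_le order_less_le_trans)+
    then have "f x > 0" using f_pos by blast
    moreover have "ereal \<nu> < ereal x" using assms \<open>L < ereal x\<close> by (rule le_less_trans)
    ultimately show "f x * ppos (1 * (x - \<nu>)) a > 0"
      by (simp add: ppos_pos)
  qed (auto intro: mult_nonneg_nonneg f_nonneg ppos_nonneg)
  then show ?thesis using z by simp
qed

lemma phi_neg_right:
  assumes "R \<le> ereal \<nu>" shows "G 1 \<nu> - G (-1) \<nu> < 0"
proof -
  obtain l r where lr: "L < ereal l" "l < r" "ereal r < R" by (rule exists_lr)
  have "G 1 \<nu> = (\<integral>x. (0::real) \<partial>(lborel::real measure))"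
    unfolding G_def
  proof (rule Bochner_Integration.integral_cong[OF refl])
    fix x
    show "f x * ppos (1 * (x - \<nu>)) a = 0"
    proof (cases "x > \<nu>")
      case True
      then have "ereal \<nu> < ereal x" by simp
      then have "R < ereal x" by (rule le_less_trans[OF assms])
      then have "\<not> ereal x < R" by simp
      then show ?thesis using f_zero[of x] by auto
    qed (auto simp: ppos_def)
  qed
  then have z: "G 1 \<nu> = 0" by simp
  have "G (-1) \<nu> > 0"
    unfolding G_def
  proof (rule integral_pos_interval[OF G_int _ lr(2)])
    fix x assume x: "l < x" "x < r"
    then have "L < ereal x" "ereal x < R" using lr
      by (meson ereal_less_le less_ereal.simps(1) less_imp_le order_less_le_trans)+
    then have "f x > 0" using f_pos by blast
    moreover have "ereal x < ereal \<nu>" using \<open>ereal x < R\<close> assms by (rule less_le_trans)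
    ultimately show "f x * ppos (-1 * (x - \<nu>)) a > 0"
      by (simp add: ppos_pos)
  qed (auto intro: mult_nonneg_nonneg f_nonneg ppos_nonneg)
  then show ?thesis using z by simp
qed

lemma zero_in:
  assumes "G 1 \<nu> = G (-1) \<nu>" shows "L < ereal \<nu>" "ereal \<nu> < R"
  using phi_pos_left[of \<nu>] phi_neg_right[of \<nu>] assms by force+

lemma phi_strict:
  assumes "L < ereal \<nu>1" "\<nu>1 < \<nu>2" "ereal \<nu>2 < R"
  shows "G 1 \<nu>1 - G (-1) \<nu>1 > G 1 \<nu>2 - G (-1) \<nu>2"
proof -
  have "G 1 \<nu>1 - G 1 \<nu>2 = (\<integral>x. f x * ppos (1 * (x - \<nu>1)) a - f x * ppos (1 * (x - \<nu>2)) a \<partial>lborel)"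
    unfolding G_def by (rule Bochner_Integration.integral_diff[symmetric]; rule G_int; simp)
  also have "\<dots> > 0"
  proof (rule integral_pos_interval[OF _ _ assms(2)])
    show "integrable lborel (\<lambda>x. f x * ppos (1 * (x - \<nu>1)) a - f x * ppos (1 * (x - \<nu>2)) a)"
      by (intro Bochner_Integration.integrable_diff G_int) auto
    show "0 \<le> f x * ppos (1 * (x - \<nu>1)) a - f x * ppos (1 * (x - \<nu>2)) a" for x
      using f_nonneg[of x] ppos_mono[OF a_nonneg, of "x - \<nu>2" "x - \<nu>1"] assms(2)
      by (simp add: mult_left_mono flip: right_diff_distrib)
    fix x assume x: "\<nu>1 < x" "x < \<nu>2"
    then have "L < ereal x" "ereal x < R" using assms
      by (meson ereal_less_le less_ereal.simps(1) less_imp_le order_less_le_trans)+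
    then have "f x > 0" using f_pos by blast
    then show "0 < f x * ppos (1 * (x - \<nu>1)) a - f x * ppos (1 * (x - \<nu>2)) a"
      using x by (simp add: ppos_pos ppos_def[of "x - \<nu>2"])
  qed
  finally have 1: "G 1 \<nu>1 > G 1 \<nu>2" by simp
  have 2: "G (-1) \<nu>1 \<le> G (-1) \<nu>2"
    unfolding G_def
  proof (rule integral_mono)
    show "integrable lborel (\<lambda>x. f x * ppos (-1 * (x - \<nu>1)) a)"
      "integrable lborel (\<lambda>x. f x * ppos (-1 * (x - \<nu>2)) a)" by (rule G_int; simp)+
    show "f x * ppos (-1 * (x - \<nu>1)) a \<le> f x * ppos (-1 * (x - \<nu>2)) a" for x
      using f_nonneg[of x] ppos_mono[OF a_nonneg, of "\<nu>1 - x" "\<nu>2 - x"] assms(2)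
      by (simp add: mult_left_mono)
  qed
  show ?thesis using 1 2 by simp
qed


lemma L_finite: "\<exists>l0. L = ereal l0"
proof (rule ccontr)
  assume "\<not> ?thesis"
  then have Lm: "L = -\<infinity>" using LR by (cases L) auto
  obtain c where c: "L < ereal c" "ereal c < R" using ereal_dense2[OF LR] by blast
  have fc: "f c > 0" using c f_pos by blast
  obtain n :: nat where n: "integral\<^sup>L lborel f / f c < real n" using reals_Archimedean2 by blast
  have "f c * real n = (\<integral>x. f c * indicator {c - real n<..<c} x \<partial>lborel)"
    by simp
  also have "\<dots> \<le> integral\<^sup>L lborel f"
  proof (rule integral_mono)
    show "integrable lborel (\<lambda>x. f c * indicator {c - real n<..<c} x)"
      by (intro Bochner_Integration.integrable_mult_right integrable_real_indicator) auto
    show "integrable lborel f" by (rule f_int)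
    fix x
    show "f c * indicator {c - real n<..<c} x \<le> f x"
    proof (cases "x \<in> {c - real n<..<c}")
      case True
      then have "f c < f x" using c Lm by (intro f_dec) auto
      then show ?thesis using True by simp
    qed (simp add: f_nonneg)
  qed
  finally show False using n fc by (simp add: field_simps)
qed

lemma exists_neg: "\<exists>\<nu>. G 1 \<nu> - G (-1) \<nu> < 0"
proof -
  obtain \<nu>1 where \<nu>1: "L < ereal \<nu>1" "ereal \<nu>1 < R" using ereal_dense2[OF LR] by blast
  obtain l where l: "L < ereal l" "ereal l < ereal \<nu>1" using ereal_dense2[OF \<nu>1(1)] by blast
  define c0 where "c0 = (\<integral>x. f x * indicator {..\<nu>1} x \<partial>lborel)"
  have int0: "integrable lborel (\<lambda>x. f x * indicator {..\<nu>1} x)"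
    by (intro integrable_real_mult_indicator f_int) auto
  have "c0 > 0"
    unfolding c0_def
  proof (rule integral_pos_interval[OF int0])
    show "l < \<nu>1" using l by simp
    show "0 \<le> f x * indicator {..\<nu>1} x" for x by (simp add: f_nonneg)
    fix x assume x: "l < x" "x < \<nu>1"
    then have "L < ereal x" "ereal x < R" using l \<nu>1
      by (meson ereal_less_le less_ereal.simps(1) less_imp_le order_less_le_trans)+
    then have "f x > 0" using f_pos by blast
    then show "0 < f x * indicator {..\<nu>1} x" using x by simp
  qed
  have ev1: "\<forall>\<^sub>F \<nu> in at_top. G 1 \<nu> < c0"
    using G1_top \<open>c0 > 0\<close> by (rule order_tendstoD)
  have ev2: "\<forall>\<^sub>F \<nu> in at_top. c0 \<le> G (-1) \<nu>"
    using eventually_ge_at_top[of "\<nu>1 + 1"]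
  proof eventually_elim
    case (elim \<nu>)
    show ?case
      unfolding c0_def G_def
    proof (rule integral_mono[OF int0])
      show "integrable lborel (\<lambda>x. f x * ppos (-1 * (x - \<nu>)) a)" by (rule G_int) simp
      fix x
      show "f x * indicator {..\<nu>1} x \<le> f x * ppos (-1 * (x - \<nu>)) a"
      proof (cases "x \<le> \<nu>1")
        case True
        then have "1 \<le> ppos (-1 * (x - \<nu>)) a" using elim a_nonneg by (intro ppos_ge1) auto
        then have "f x * 1 \<le> f x * ppos (-1 * (x - \<nu>)) a" using f_nonneg[of x] by (rule mult_left_mono)
        then show ?thesis using True by simp
      qed (simp add: f_nonneg ppos_nonneg)
    qed
  qed
  obtain \<nu> where "G 1 \<nu> < c0" "c0 \<le> G (-1) \<nu>"
    using eventually_happens'[OF _ eventually_conj[OF ev1 ev2]] by auto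
  then have "G 1 \<nu> - G (-1) \<nu> < 0" by simp
  then show ?thesis by blast
qed

lemma unique_zero: "\<exists>!\<nu>. G 1 \<nu> = G (-1) \<nu>"
proof -
  obtain l0 where l0: "L = ereal l0" using L_finite by blast
  obtain \<nu>n where \<nu>n: "G 1 \<nu>n - G (-1) \<nu>n < 0" using exists_neg by blast
  have pos: "G 1 l0 - G (-1) l0 > 0" using phi_pos_left[of l0] l0 by simp
  have le: "l0 \<le> \<nu>n"
  proof (rule ccontr)
    assume "\<not> l0 \<le> \<nu>n"
    then have "ereal \<nu>n \<le> L" using l0 by simp
    then show False using phi_pos_left \<nu>n by force
  qed
  have "\<exists>x. l0 \<le> x \<and> x \<le> \<nu>n \<and> G 1 x - G (-1) x = 0"
    using \<nu>n pos le
    by (intro IVT2) (auto intro!: continuous_intros G_cont)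
  then obtain \<nu> where \<nu>: "G 1 \<nu> = G (-1) \<nu>" by auto
  show ?thesis
  proof (rule ex1I[of _ \<nu>])
    show "G 1 \<nu> = G (-1) \<nu>" by (rule \<nu>)
    fix \<mu> assume \<mu>: "G 1 \<mu> = G (-1) \<mu>"
    show "\<mu> = \<nu>"
    proof (rule ccontr)
      assume "\<mu> \<noteq> \<nu>"
      then consider "\<mu> < \<nu>" | "\<nu> < \<mu>" by linarith
      then show False
      proof cases
        case 1
        show False using phi_strict[OF zero_in(1)[OF \<mu>] 1 zero_in(2)[OF \<nu>]] \<mu> \<nu> by simp
      next
        case 2
        show False using phi_strict[OF zero_in(1)[OF \<nu>] 2 zero_in(2)[OF \<mu>]] \<mu> \<nu> by simp
      qed
    qed
  qed
qed


definition Pf where "Pf \<nu> y = (if 0 < y \<and> ereal (\<nu> + y) < R then rpow y a * f (\<nu> + y) else 0)"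
definition Qf where "Qf \<nu> y = (if 0 < y \<and> L < ereal (\<nu> - y) then rpow y a * f (\<nu> - y) else 0)"

lemma rpow_pos: "y > 0 \<Longrightarrow> rpow y a > 0"
  by (simp add: rpow_def)

lemma Pf_eq: "Pf \<nu> y = f (\<nu> + 1 * y) * ppos (1 * ((\<nu> + 1 * y) - \<nu>)) a"
  using f_zero[of "\<nu> + y"] by (auto simp: Pf_def ppos_def rpow_def)

lemma Qf_eq: "Qf \<nu> y = f (\<nu> + -1 * y) * ppos (-1 * ((\<nu> + -1 * y) - \<nu>)) a"
  using f_zero[of "\<nu> - y"] by (auto simp: Qf_def ppos_def rpow_def)

lemma Pf_int: "integrable lborel (Pf \<nu>)"
proof -
  have "integrable lborel (\<lambda>y. (\<lambda>x. f x * ppos (1 * (x - \<nu>)) a) (\<nu> + 1 * y))"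
    by (rule lborel_integrable_real_affine[OF G_int]) auto
  then show ?thesis by (simp add: Pf_eq[abs_def])
qed

lemma Qf_int: "integrable lborel (Qf \<nu>)"
proof -
  have "integrable lborel (\<lambda>y. (\<lambda>x. f x * ppos (-1 * (x - \<nu>)) a) (\<nu> + -1 * y))"
    by (rule lborel_integrable_real_affine[OF G_int]) auto
  then show ?thesis by (simp only: Qf_eq[abs_def])
qed

lemma Pf_integral: "integral\<^sup>L lborel (Pf \<nu>) = G 1 \<nu>"
  unfolding G_def
  by (subst lborel_integral_real_affine[where c = 1 and t = \<nu>]) (simp_all add: Pf_eq[abs_def])

lemma Qf_integral: "integral\<^sup>L lborel (Qf \<nu>) = G (-1) \<nu>"
  unfolding G_def
  by (subst lborel_integral_real_affine[where c = "-1" and t = \<nu>]) (simp_all only: Qf_eq[abs_def], simp)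

lemma Pf_nonneg: "Pf \<nu> y \<ge> 0"
  by (simp add: Pf_def f_nonneg rpow_nonneg)

lemma Qf_nonneg: "Qf \<nu> y \<ge> 0"
  by (simp add: Qf_def f_nonneg rpow_nonneg)

lemma P_le_Q: assumes "0 < y" "L < ereal (\<nu> - y)" shows "Pf \<nu> y \<le> Qf \<nu> y"
proof (cases "ereal (\<nu> + y) < R")
  case True
  have "f (\<nu> + y) < f (\<nu> - y)" using assms True by (intro f_dec) auto
  then show ?thesis using assms True rpow_pos[of y]
    by (simp add: Pf_def Qf_def)
next
  case False
  then show ?thesis using Qf_nonneg by (simp add: Pf_def)
qed

lemma P_lt_Q: assumes "0 < y" "L < ereal (\<nu> - y)" "ereal (\<nu> + y) < R" shows "Pf \<nu> y < Qf \<nu> y"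
proof -
  have "f (\<nu> + y) < f (\<nu> - y)" using assms by (intro f_dec) auto
  then show ?thesis using assms rpow_pos[of y]
    by (simp add: Pf_def Qf_def)
qed

lemma cdf_density_real:
  fixes g :: "real \<Rightarrow> real"
  assumes g: "integrable lborel g" "\<And>y. g y \<ge> 0"
  shows "cdf (density lborel (\<lambda>y. ennreal (g y))) x = (\<integral>y. g y * indicator {..x} y \<partial>lborel)"
proof -
  have int: "integrable lborel (\<lambda>y. g y * indicator {..x} y)"
    by (intro integrable_real_mult_indicator g) auto
  have "emeasure (density lborel (\<lambda>y. ennreal (g y))) {..x} = (\<integral>\<^sup>+y. ennreal (g y) * indicator {..x} y \<partial>lborel)"
    using g by (subst emeasure_density) auto
  also have "\<dots> = (\<integral>\<^sup>+y. ennreal (g y * indicator {..x} y) \<partial>lborel)"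
    by (intro nn_integral_cong) (auto simp: indicator_def)
  also have "\<dots> = ennreal (\<integral>y. g y * indicator {..x} y \<partial>lborel)"
    using int g by (intro nn_integral_eq_integral) auto
  finally show ?thesis
    using g by (simp add: cdf_def measure_def)
qed

lemma dominance:
  assumes \<nu>: "G 1 \<nu> = G (-1) \<nu>"
  shows "let H = (\<integral>y\<in>{y. 0 < y \<and> L < ereal (\<nu> - y)}. rpow y a * f (\<nu> - y) \<partial>lborel);
             gplus = (\<lambda>y. (if 0 < y \<and> ereal (\<nu> + y) < R then rpow y a * f (\<nu> + y) else 0) / H);
             gminus = (\<lambda>y. (if 0 < y \<and> L < ereal (\<nu> - y) then rpow y a * f (\<nu> - y) else 0) / H)
         in strictly_dominates (density lborel (\<lambda>y. ennreal (gplus y)))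
                               (density lborel (\<lambda>y. ennreal (gminus y)))"
proof -
  define P where "P = Pf \<nu>"
  define Q where "Q = Qf \<nu>"
  define H where "H = (\<integral>y\<in>{y. 0 < y \<and> L < ereal (\<nu> - y)}. rpow y a * f (\<nu> - y) \<partial>lborel)"
  have HQ: "H = integral\<^sup>L lborel Q"
    unfolding H_def Q_def set_lebesgue_integral_def
    by (intro Bochner_Integration.integral_cong) (auto simp: Qf_def indicator_def)
  have Pint: "integrable lborel P" and Qint: "integrable lborel Q"
    unfolding P_def Q_def by (rule Pf_int, rule Qf_int)
  have PQ: "integral\<^sup>L lborel P = integral\<^sup>L lborel Q"
    unfolding P_def Q_def Pf_integral Qf_integral by (rule \<nu>)
  have Pnn: "\<And>y. P y \<ge> 0" and Qnn: "\<And>y. Q y \<ge> 0"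
    unfolding P_def Q_def by (rule Pf_nonneg, rule Qf_nonneg)
  have in1: "L < ereal \<nu>" and in2: "ereal \<nu> < R" using zero_in[OF \<nu>] by auto
  obtain l where l: "L < ereal l" "ereal l < ereal \<nu>" using ereal_dense2[OF in1] by blast
  obtain r where r: "ereal \<nu> < ereal r" "ereal r < R" using ereal_dense2[OF in2] by blast
  define t0 where "t0 = min (\<nu> - l) (r - \<nu>)"
  have t0: "0 < t0" using l r by (simp add: t0_def)
  have t0L: "L < ereal (\<nu> - y)" if "y \<le> t0" for y
  proof -
    have "l \<le> \<nu> - y" using that by (simp add: t0_def)
    then have "ereal l \<le> ereal (\<nu> - y)" by simp
    with l(1) show ?thesis by (rule less_le_trans)
  qed
  have t0R: "ereal (\<nu> + y) < R" if "y < t0" for y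
  proof -
    have "\<nu> + y < r" using that by (simp add: t0_def)
    then have "ereal (\<nu> + y) < ereal r" by simp
    then show ?thesis using r(2) by (rule less_trans)
  qed
  have Hpos: "H > 0"
    unfolding HQ
  proof (rule integral_pos_interval[OF Qint Qnn t0])
    fix y assume y: "0 < y" "y < t0"
    have "ereal (\<nu> - y) < ereal \<nu>" using y by simp
    then have "ereal (\<nu> - y) < R" using in2 by (rule less_trans)
    then have "f (\<nu> - y) > 0" using f_pos[of "\<nu> - y"] t0L[of y] y by simp
    then show "Q y > 0" using y t0L[of y] rpow_pos[of y] by (simp add: Q_def Qf_def)
  qed
  define D where "D t = (\<integral>y. (Q y - P y) * indicator {..t} y \<partial>lborel)" for t
  have Dint: "integrable lborel (\<lambda>y. (Q y - P y) * indicator {..t} y)" for t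
    by (intro integrable_real_mult_indicator Bochner_Integration.integrable_diff Pint Qint) auto
  have Dnn: "D t \<ge> 0" for t
  proof (cases "\<forall>y. 0 < y \<and> y \<le> t \<longrightarrow> P y \<le> Q y")
    case True
    have "(Q y - P y) * indicator {..t} y \<ge> 0" for y
    proof (cases "0 < y \<and> y \<le> t")
      case True
      then show ?thesis using \<open>\<forall>y. 0 < y \<and> y \<le> t \<longrightarrow> P y \<le> Q y\<close> by auto
    next
      case False
      then have "y \<le> 0 \<or> y > t" by auto
      then show ?thesis by (auto simp: P_def Q_def Pf_def Qf_def)
    qed
    then show ?thesis unfolding D_def by (intro Bochner_Integration.integral_nonneg) auto
  next
    case False
    then obtain y0 where y0: "0 < y0" "y0 \<le> t" "Q y0 < P y0" by (auto simp: not_le)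
    have nL: "\<not> L < ereal (\<nu> - y0)"
      using P_le_Q[of y0 \<nu>] y0 by (auto simp: P_def Q_def)
    have Qz: "Q y = 0" if "y > t" for y
    proof -
      have "ereal (\<nu> - y) \<le> ereal (\<nu> - y0)" using that y0 by simp
      then have "\<not> L < ereal (\<nu> - y)" using nL by (meson less_le_trans)
      then show ?thesis by (simp add: Q_def Qf_def)
    qed
    have eq: "(Q y - P y) * indicator {..t} y = (Q y - P y) + P y * indicator {t<..} y" for y
      using Qz[of y] by (cases "y \<le> t") (auto simp: indicator_def)
    have "D t = (\<integral>y. (Q y - P y) + P y * indicator {t<..} y \<partial>lborel)"
      unfolding D_def eq ..
    also have "\<dots> = (\<integral>y. Q y - P y \<partial>lborel) + (\<integral>y. P y * indicator {t<..} y \<partial>lborel)"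
      by (intro Bochner_Integration.integral_add Bochner_Integration.integrable_diff
           integrable_real_mult_indicator Pint Qint) auto
    also have "(\<integral>y. Q y - P y \<partial>lborel) = 0"
      using PQ Pint Qint by (simp add: Bochner_Integration.integral_diff)
    finally have "D t = (\<integral>y. P y * indicator {t<..} y \<partial>lborel)" by simp
    also have "\<dots> \<ge> 0"
      by (intro Bochner_Integration.integral_nonneg) (simp add: Pnn)
    finally show ?thesis .
  qed
  have Dpos: "D t0 > 0"
    unfolding D_def
  proof (rule integral_pos_interval[OF Dint _ t0])
    fix y
    show "0 \<le> (Q y - P y) * indicator {..t0} y"
    proof (cases "0 < y \<and> y \<le> t0")
      case True
      then show ?thesis using P_le_Q[of y \<nu>] t0L[of y] by (simp add: P_def Q_def)
    next
      case False
      then have "y \<le> 0 \<or> y > t0" by auto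
      then show ?thesis by (auto simp: P_def Q_def Pf_def Qf_def)
    qed
  next
    fix y assume y: "0 < y" "y < t0"
    then show "0 < (Q y - P y) * indicator {..t0} y"
      using P_lt_Q[of y \<nu>] t0L[of y] t0R[of y] by (simp add: P_def Q_def)
  qed
  define gp where "gp y = P y / H" for y
  define gm where "gm y = Q y / H" for y
  have gpint: "integrable lborel gp" unfolding gp_def by (intro integrable_divide Pint)
  have gmint: "integrable lborel gm" unfolding gm_def by (intro integrable_divide Qint)
  have gpnn: "gp y \<ge> 0" for y unfolding gp_def using Pnn Hpos by simp
  have gmnn: "gm y \<ge> 0" for y unfolding gm_def using Qnn Hpos by simp
  have diff: "cdf (density lborel (\<lambda>y. ennreal (gm y))) t - cdf (density lborel (\<lambda>y. ennreal (gp y))) t = D t / H" for t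
  proof -
    have "cdf (density lborel (\<lambda>y. ennreal (gm y))) t - cdf (density lborel (\<lambda>y. ennreal (gp y))) t
        = (\<integral>y. gm y * indicator {..t} y \<partial>lborel) - (\<integral>y. gp y * indicator {..t} y \<partial>lborel)"
      by (simp add: cdf_density_real gpint gmint gpnn gmnn)
    also have "\<dots> = (\<integral>y. (Q y - P y) * indicator {..t} y / H \<partial>lborel)"
    proof -
      have "(\<integral>y. gm y * indicator {..t} y \<partial>lborel) - (\<integral>y. gp y * indicator {..t} y \<partial>lborel)
          = (\<integral>y. gm y * indicator {..t} y - gp y * indicator {..t} y \<partial>lborel)"
        by (rule Bochner_Integration.integral_diff[symmetric])
           (intro integrable_real_mult_indicator gmint gpint; simp)+
      also have "\<dots> = (\<integral>y. (Q y - P y) * indicator {..t} y / H \<partial>lborel)"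
        by (intro Bochner_Integration.integral_cong refl)
           (simp add: gp_def gm_def left_diff_distrib diff_divide_distrib)
      finally show ?thesis .
    qed
    also have "\<dots> = D t / H" unfolding D_def by simp
    finally show ?thesis .
  qed
  have "strictly_dominates (density lborel (\<lambda>y. ennreal (gp y))) (density lborel (\<lambda>y. ennreal (gm y)))"
    unfolding strictly_dominates_def
  proof
    show "\<forall>x. cdf (density lborel (\<lambda>y. ennreal (gp y))) x \<le> cdf (density lborel (\<lambda>y. ennreal (gm y))) x"
    proof
      fix x
      have "D x / H \<ge> 0" using Dnn[of x] Hpos by simp
      then show "cdf (density lborel (\<lambda>y. ennreal (gp y))) x \<le> cdf (density lborel (\<lambda>y. ennreal (gm y))) x"
        using diff[of x] by simp
    qed
    have "D t0 / H > 0" using Dpos Hpos by simp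
    then show "\<exists>x. cdf (density lborel (\<lambda>y. ennreal (gm y))) x \<noteq> cdf (density lborel (\<lambda>y. ennreal (gp y))) x"
      using diff[of t0] by (intro exI[of _ t0]) simp
  qed
  then show ?thesis
    unfolding Let_def H_def[symmetric] gp_def gm_def P_def Q_def Pf_def[abs_def] Qf_def[abs_def] .
qed

end

theorem proposition2:
  fixes M :: "'a measure" and X :: "'a \<Rightarrow> real" and f :: "real \<Rightarrow> real"
    and L R :: ereal and p :: real
  assumes "prob_space M"
    and "distributed M lborel X (\<lambda>x. ennreal (f x))"
    and "\<forall>x. f x \<ge> 0"
    and "L < R"
    and "\<forall>x. f x > 0 \<longleftrightarrow> (L < ereal x \<and> ereal x < R)"
    and "\<forall>x y. L < ereal x \<and> x < y \<and> ereal y < R \<longrightarrow> f y < f x"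
    and "p \<ge> 1"
    and "integrable M (\<lambda>\<omega>. rpow \<bar>X \<omega>\<bar> (p - 1))"
  shows "let \<nu> = p_mean M X p;
             H = (\<integral>y\<in>{y. 0 < y \<and> L < ereal (\<nu> - y)}. rpow y (p - 1) * f (\<nu> - y) \<partial>lborel);
             gplus = (\<lambda>y. (if 0 < y \<and> ereal (\<nu> + y) < R then rpow y (p - 1) * f (\<nu> + y) else 0) / H);
             gminus = (\<lambda>y. (if 0 < y \<and> L < ereal (\<nu> - y) then rpow y (p - 1) * f (\<nu> - y) else 0) / H)
         in strictly_dominates (density lborel (\<lambda>y. ennreal (gplus y)))
                               (density lborel (\<lambda>y. ennreal (gminus y)))"
proof -
  interpret P: prob_space M by (rule assms(1))
  note D = assms(2)
  have fnn: "\<And>x. x \<in> space lborel \<Longrightarrow> 0 \<le> f x" using assms(3) by simp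
  have fmeas: "f \<in> borel_measurable borel"
    using distributed_real_measurable[OF fnn D] by simp
  have fint: "integrable lborel f"
    using distributed_integrable[OF D, of "\<lambda>_. 1"] fnn by simp
  have fmint: "integrable lborel (\<lambda>x. f x * rpow (abs x) (p - 1))"
    using distributed_integrable[OF D, of "\<lambda>x. rpow (abs x) (p - 1)"] fnn assms(8) by simp
  interpret pm f L R "p - 1"
    using assms(3,4,5,6,7) fmeas fint fmint by unfold_locales auto
  have eqM: "(\<integral>\<omega>. ppos (c * (X \<omega> - \<nu>)) (p - 1) \<partial>M) = G c \<nu>" for c \<nu>
    unfolding G_def by (rule distributed_integral[OF D _ fnn, symmetric]) simp
  have "(\<integral>\<omega>. ppos (X \<omega> - \<nu>) (p - 1) \<partial>M) = (\<integral>\<omega>. ppos (\<nu> - X \<omega>) (p - 1) \<partial>M)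
        \<longleftrightarrow> G 1 \<nu> = G (-1) \<nu>" for \<nu>
    using eqM[of 1 \<nu>] eqM[of "-1" \<nu>] by simp
  then have pm_eq: "p_mean M X p = (THE \<nu>. G 1 \<nu> = G (-1) \<nu>)"
    unfolding p_mean_def by simp
  have "G 1 (p_mean M X p) = G (-1) (p_mean M X p)"
    unfolding pm_eq by (rule theI'[OF unique_zero])
  from dominance[OF this] show ?thesis by (simp only: Let_def)
qed

end
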